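(* Let $d$ be a prime (possibly $d=2$), $n\in\mathbb{N}$, $A$ a multiplicative abelian group with an embedding $\zeta:\mathbb{Z}_d\to A$ such that every element $a\in\zeta(\mathbb{Z}_d)$ has a square root in $A$ (an element $b\in A$ with $b^2=a$), and let $W_1,W_2\in M_n(\mathbb{Z}_d)$ be such that $\Omega_i=W_i-W_i^T$ has full rank over $\mathbb{Z}_d$ for $i=1,2$. Then the polar commutator groups $\mathcal{G}_d^n(A,\zeta,W_1)$ and $\mathcal{G}_d^n(A,\zeta,W_2)$ are isomorphic.
   Context: An embedding $\zeta:\mathbb{Z}_d\to A$ is an injective group homomorphism. Let $F\subseteq A$ be a fixed set of representatives of $A/\zeta(\mathbb{Z}_d)$ with $1\in F$, and $r:A\to F$, $u:A\to\mathbb{Z}_d$ the maps with $a=r(a)\zeta(u(a))$. For $W\in M_n(\mathbb{Z}_d)$, $\mathcal{G}_d^n(A,\zeta,W)$ is the set $F\times\mathbb{Z}_d\times\mathbb{Z}_d^n$ with multiplication $(a,p,x)\cdot(b,q,y)=(r(ab),\,u(ab)+p+q+x^TWy,\,x+y)$. *)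

theory Defs
  imports "HOL-Algebra.Elementary_Groups" "HOL-Computational_Algebra.Primes"
begin

text \<open>Z_d is modelled as the integers {0..<d} (integer_mod_group d); vectors in Z_d^n as
  extensional functions {0..<n} to {0..<d}; n x n matrices as functions nat to nat to int
  (only indices below n matter).\<close>

definition zvecs :: "nat \<Rightarrow> nat \<Rightarrow> (nat \<Rightarrow> int) set" where
  "zvecs d n = {0..<n} \<rightarrow>\<^sub>E {0..<int d}"

definition zmats :: "nat \<Rightarrow> nat \<Rightarrow> (nat \<Rightarrow> nat \<Rightarrow> int) set" where
  "zmats d n = {W. \<forall>i<n. \<forall>j<n. W i j \<in> {0..<int d}}"

definition omega_mat :: "nat \<Rightarrow> (nat \<Rightarrow> nat \<Rightarrow> int) \<Rightarrow> nat \<Rightarrow> nat \<Rightarrow> int" where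
  "omega_mat d W = (\<lambda>i j. (W i j - W j i) mod int d)"

definition full_rank_mod :: "nat \<Rightarrow> nat \<Rightarrow> (nat \<Rightarrow> nat \<Rightarrow> int) \<Rightarrow> bool" where
  "full_rank_mod d n M \<longleftrightarrow>
     (\<forall>x \<in> zvecs d n. (\<forall>i<n. (\<Sum>j<n. M i j * x j) mod int d = 0) \<longrightarrow> (\<forall>j<n. x j = 0))"

definition bilin :: "nat \<Rightarrow> (nat \<Rightarrow> nat \<Rightarrow> int) \<Rightarrow> (nat \<Rightarrow> int) \<Rightarrow> (nat \<Rightarrow> int) \<Rightarrow> int" where
  "bilin n W x y = (\<Sum>i<n. \<Sum>j<n. x i * W i j * y j)"

definition is_transversal :: "('a, 'b) monoid_scheme \<Rightarrow> nat \<Rightarrow> (int \<Rightarrow> 'a) \<Rightarrow> 'a set \<Rightarrow> bool" where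
  "is_transversal A d \<zeta> F \<longleftrightarrow> F \<subseteq> carrier A \<and> \<one>\<^bsub>A\<^esub> \<in> F \<and>
     (\<forall>a \<in> carrier A. \<exists>!f. f \<in> F \<and> (\<exists>k \<in> {0..<int d}. a = f \<otimes>\<^bsub>A\<^esub> \<zeta> k))"

definition rep_r :: "('a, 'b) monoid_scheme \<Rightarrow> nat \<Rightarrow> (int \<Rightarrow> 'a) \<Rightarrow> 'a set \<Rightarrow> 'a \<Rightarrow> 'a" where
  "rep_r A d \<zeta> F a = (THE f. f \<in> F \<and> (\<exists>k \<in> {0..<int d}. a = f \<otimes>\<^bsub>A\<^esub> \<zeta> k))"

definition rep_u :: "('a, 'b) monoid_scheme \<Rightarrow> nat \<Rightarrow> (int \<Rightarrow> 'a) \<Rightarrow> 'a set \<Rightarrow> 'a \<Rightarrow> int" where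
  "rep_u A d \<zeta> F a = (THE k. k \<in> {0..<int d} \<and> a = rep_r A d \<zeta> F a \<otimes>\<^bsub>A\<^esub> \<zeta> k)"

definition polar_group ::
  "nat \<Rightarrow> nat \<Rightarrow> ('a, 'b) monoid_scheme \<Rightarrow> (int \<Rightarrow> 'a) \<Rightarrow> 'a set \<Rightarrow> (nat \<Rightarrow> nat \<Rightarrow> int)
   \<Rightarrow> ('a \<times> int \<times> (nat \<Rightarrow> int)) monoid" where
  "polar_group d n A \<zeta> F W =
    \<lparr> carrier = F \<times> {0..<int d} \<times> zvecs d n,
      monoid.mult = (\<lambda>(a, p, x) (b, q, y).
        (rep_r A d \<zeta> F (a \<otimes>\<^bsub>A\<^esub> b),
         (rep_u A d \<zeta> F (a \<otimes>\<^bsub>A\<^esub> b) + p + q + bilin n W x y) mod int d,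
         (\<lambda>i \<in> {0..<n}. (x i + y i) mod int d))),
      one = (\<one>\<^bsub>A\<^esub>, 0, (\<lambda>i \<in> {0..<n}. 0)) \<rparr>"

end

theory Submission
  imports Defs
begin

lemma sum_mod_cong:
  fixes f g :: "'x \<Rightarrow> int"
  assumes "\<And>i. i \<in> S \<Longrightarrow> f i mod m = g i mod m"
  shows "sum f S mod m = sum g S mod m"
proof -
  have "sum f S mod m = (\<Sum>i\<in>S. f i mod m) mod m" by (simp add: mod_sum_eq)
  also have "\<dots> = (\<Sum>i\<in>S. g i mod m) mod m" using assms by (simp cong: sum.cong)
  also have "\<dots> = sum g S mod m" by (simp add: mod_sum_eq)
  finally show ?thesis .
qed

lemma bilin_lin_left:
  "bilin n W (\<lambda>i. \<Sum>a<N. t a * c a i) y = (\<Sum>a<N. t a * bilin n W (c a) y)"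
  unfolding bilin_def
  by (simp add: sum_distrib_left sum_distrib_right mult.assoc sum.swap[of _ "{..<N}"])

lemma bilin_lin_right:
  "bilin n W x (\<lambda>i. \<Sum>a<N. t a * c a i) = (\<Sum>a<N. t a * bilin n W x (c a))"
  unfolding bilin_def
  by (simp add: sum_distrib_left sum_distrib_right mult.assoc mult.left_commute sum.swap[of _ "{..<N}"])

lemma bilin_diff_left:
  "bilin n W (\<lambda>i. x i - y i) z = bilin n W x z - bilin n W y z"
  unfolding bilin_def by (simp add: algebra_simps sum_subtractf)

lemma bilin_smult_left:
  "bilin n W (\<lambda>i. h * x i) z = h * bilin n W x z"
  unfolding bilin_def by (simp add: algebra_simps sum_distrib_left)

lemma bilin_smult_right:
  "bilin n W z (\<lambda>i. h * x i) = h * bilin n W z x"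
  unfolding bilin_def by (simp add: algebra_simps sum_distrib_left)

lemma bilin_cong:
  assumes "\<And>i. i < n \<Longrightarrow> x i mod m = x' i mod m"
    and "\<And>i. i < n \<Longrightarrow> y i mod m = y' i mod m"
  shows "bilin n W x y mod m = bilin n W x' y' mod m"
  unfolding bilin_def
proof (rule sum_mod_cong, rule sum_mod_cong)
  fix i j assume "i \<in> {..<n}" "j \<in> {..<n}"
  then show "x i * W i j * y j mod m = x' i * W i j * y' j mod m"
    using assms by (metis lessThan_iff mod_mult_cong)
qed

lemma bilin_cong_mat:
  assumes "\<And>i j. i < n \<Longrightarrow> j < n \<Longrightarrow> W i j mod m = W' i j mod m"
  shows "bilin n W x y mod m = bilin n W' x y mod m"
  unfolding bilin_def
proof (rule sum_mod_cong, rule sum_mod_cong)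
  fix i j assume "i \<in> {..<n}" "j \<in> {..<n}"
  then show "x i * W i j * y j mod m = x i * W' i j * y j mod m"
    using assms by (metis lessThan_iff mod_mult_cong)
qed

lemma bilin_double:
  "bilin n W x y = (\<Sum>a<n. \<Sum>b<n. x a * y b * W a b)"
  unfolding bilin_def by (simp add: algebra_simps)

definition skew :: "nat \<Rightarrow> (nat \<Rightarrow> nat \<Rightarrow> int) \<Rightarrow> (nat \<Rightarrow> int) \<Rightarrow> (nat \<Rightarrow> int) \<Rightarrow> int" where
  "skew n W x y = bilin n W x y - bilin n W y x"

lemma skew_antisym: "skew n W x y = - skew n W y x"
  unfolding skew_def by simp

lemma skew_self: "skew n W x x = 0"
  unfolding skew_def by simp

lemma skew_lin_left:
  "skew n W (\<lambda>i. \<Sum>a<N. t a * c a i) y = (\<Sum>a<N. t a * skew n W (c a) y)"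
  unfolding skew_def by (simp add: bilin_lin_left bilin_lin_right sum_subtractf[symmetric] right_diff_distrib)

lemma skew_diff_left:
  "skew n W (\<lambda>i. x i - y i) z = skew n W x z - skew n W y z"
proof -
  have "bilin n W z (\<lambda>i. x i - y i) = bilin n W z x - bilin n W z y"
    unfolding bilin_def by (simp add: algebra_simps sum_subtractf)
  then show ?thesis unfolding skew_def by (simp add: bilin_diff_left)
qed

lemma skew_smult_left: "skew n W (\<lambda>i. h * x i) z = h * skew n W x z"
  unfolding skew_def by (simp add: bilin_smult_left bilin_smult_right algebra_simps)

lemma skew_smult_right: "skew n W z (\<lambda>i. h * x i) = h * skew n W z x"
  unfolding skew_def by (simp add: bilin_smult_left bilin_smult_right algebra_simps)

lemma skew_cong:
  assumes "\<And>i. i < n \<Longrightarrow> x i mod m = x' i mod m"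
    and "\<And>i. i < n \<Longrightarrow> y i mod m = y' i mod m"
  shows "skew n W x y mod m = skew n W x' y' mod m"
  unfolding skew_def
  by (rule mod_diff_cong; rule bilin_cong) (use assms in auto)

definition uvec :: "nat \<Rightarrow> nat \<Rightarrow> int" where
  "uvec i = (\<lambda>j. if j = i then 1 else 0)"

lemma bilin_uvec_left: "i < n \<Longrightarrow> bilin n W (uvec i) y = (\<Sum>j<n. W i j * y j)"
proof -
  assume "i < n"
  have "bilin n W (uvec i) y = (\<Sum>ia<n. if ia = i then (\<Sum>j<n. W i j * y j) else 0)"
    unfolding bilin_def uvec_def by (rule sum.cong) auto
  then show ?thesis using \<open>i < n\<close> by simp
qed

lemma bilin_uvec_right: "i < n \<Longrightarrow> bilin n W y (uvec i) = (\<Sum>j<n. y j * W j i)"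
proof -
  assume "i < n"
  have "bilin n W y (uvec i) = (\<Sum>ia<n. (\<Sum>j<n. if j = i then y ia * W ia i else 0))"
    unfolding bilin_def uvec_def by (intro sum.cong) auto
  then show ?thesis using \<open>i < n\<close> by simp
qed

lemma zvecs_card: "card (zvecs d n) = d ^ n"
  unfolding zvecs_def by (simp add: card_PiE)

lemma zvecs_finite: "finite (zvecs d n)"
  unfolding zvecs_def by (simp add: finite_PiE)

lemma nondeg:
  assumes "full_rank_mod d n (omega_mat d W)" "d > 0" "i0 < n" "e i0 mod int d \<noteq> 0"
  shows "\<exists>i<n. skew n W (uvec i) e mod int d \<noteq> 0"
proof (rule ccontr)
  assume H: "\<not> ?thesis"
  define x where "x = (\<lambda>j\<in>{0..<n}. e j mod int d)"
  have xz: "x \<in> zvecs d n" unfolding x_def zvecs_def using assms(2) by auto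
  have "(\<Sum>j<n. omega_mat d W i j * x j) mod int d = 0" if "i < n" for i
  proof -
    have "(\<Sum>j<n. omega_mat d W i j * x j) mod int d = (\<Sum>j<n. (W i j - W j i) * e j) mod int d"
      by (rule sum_mod_cong) (auto simp: omega_mat_def x_def mod_mult_eq)
    also have "(\<Sum>j<n. (W i j - W j i) * e j) = skew n W (uvec i) e"
      unfolding skew_def using that
      by (simp add: bilin_uvec_left bilin_uvec_right algebra_simps sum_subtractf)
    finally show ?thesis using H that by auto
  qed
  then have "\<forall>j<n. x j = 0" using assms(1) xz unfolding full_rank_mod_def by blast
  then show False using assms(3,4) unfolding x_def by auto
qed

definition partner :: "nat \<Rightarrow> nat" where
  "partner a = (if even a then Suc a else a - 1)"
definition sgnp :: "nat \<Rightarrow> int" where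
  "sgnp a = (if even a then 1 else -1)"
definition Jf :: "nat \<Rightarrow> nat \<Rightarrow> int" where
  "Jf a b = (if b = partner a then sgnp a else 0)"
definition lmap :: "nat \<Rightarrow> nat \<Rightarrow> nat \<Rightarrow> (nat \<Rightarrow> nat \<Rightarrow> int) \<Rightarrow> (nat \<Rightarrow> int) \<Rightarrow> (nat \<Rightarrow> int)" where
  "lmap d n N c x = (\<lambda>i\<in>{0..<n}. (\<Sum>a<N. x a * c a i) mod int d)"
definition sfam :: "nat \<Rightarrow> nat \<Rightarrow> (nat \<Rightarrow> nat \<Rightarrow> int) \<Rightarrow> nat \<Rightarrow> (nat \<Rightarrow> nat \<Rightarrow> int) \<Rightarrow> bool" where
  "sfam d n W k c \<longleftrightarrow> (\<forall>a<2*k. \<forall>b<2*k. skew n W (c a) (c b) mod int d = Jf a b mod int d)"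

lemma partner_inv[simp]: "partner (partner a) = a"
  unfolding partner_def by auto

lemma partner_lt: "a < 2*k \<Longrightarrow> partner a < 2*k"
  unfolding partner_def by auto

lemma partner_eq: "(b = partner a) = (a = partner b)"
  by (metis partner_inv)

lemma sgnp_sq[simp]: "sgnp a * sgnp a = 1"
  unfolding sgnp_def by auto

lemma sgnp_sq2[simp]: "sgnp a * (sgnp a * x) = x"
  unfolding sgnp_def by auto

lemma sum_partner:
  assumes "b < 2*k"
  shows "(\<Sum>a<2*k. t a * Jf a b) = t (partner b) * sgnp (partner b)"
proof -
  have "(\<Sum>a<2*k. t a * Jf a b) = (\<Sum>a<2*k. if a = partner b then t a * sgnp a else 0)"
    unfolding Jf_def by (rule sum.cong) (auto simp: partner_eq)
  also have "\<dots> = t (partner b) * sgnp (partner b)"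
    using partner_lt[OF assms] by simp
  finally show ?thesis .
qed

lemma sfam_pair:
  assumes "sfam d n W k c" "b < 2*k"
  shows "(\<Sum>a<2*k. t a * skew n W (c a) (c b)) mod int d = (t (partner b) * sgnp (partner b)) mod int d"
proof -
  have "(\<Sum>a<2*k. t a * skew n W (c a) (c b)) mod int d = (\<Sum>a<2*k. t a * Jf a b) mod int d"
    using assms unfolding sfam_def by (intro sum_mod_cong) (auto intro: mod_mult_cong)
  then show ?thesis using sum_partner[OF assms(2)] by simp
qed

lemma lmap_in: "d > 0 \<Longrightarrow> lmap d n N c x \<in> zvecs d n"
  unfolding lmap_def zvecs_def by auto

lemma lmap_cong: "i < n \<Longrightarrow> lmap d n N c x i mod int d = (\<Sum>a<N. x a * c a i) mod int d"
  unfolding lmap_def by simp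

lemma zvecs_ext: "x \<in> zvecs d n \<Longrightarrow> y \<in> zvecs d n \<Longrightarrow> (\<And>i. i < n \<Longrightarrow> x i = y i) \<Longrightarrow> x = y"
  unfolding zvecs_def by (rule PiE_ext) auto

lemma zvecs_mod: "x \<in> zvecs d n \<Longrightarrow> i < n \<Longrightarrow> x i mod int d = x i"
  unfolding zvecs_def by (auto simp: PiE_iff)

lemma sign_cancel:
  fixes u v :: int
  assumes "(u * sgnp a) mod m = (v * sgnp a) mod m"
  shows "u mod m = v mod m"
proof -
  have "(u * sgnp a * sgnp a) mod m = (v * sgnp a * sgnp a) mod m"
    using assms by (metis mod_mult_cong)
  then show ?thesis by (simp add: mult.assoc)
qed

lemma sfam_coord:
  assumes "sfam d n W k c" "b < 2*k"
  shows "skew n W (lmap d n (2*k) c x) (c b) mod int d = (x (partner b) * sgnp (partner b)) mod int d"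
proof -
  have "skew n W (lmap d n (2*k) c x) (c b) mod int d
      = skew n W (\<lambda>i. \<Sum>a<2*k. x a * c a i) (c b) mod int d"
    by (rule skew_cong) (auto simp: lmap_cong)
  also have "\<dots> = (\<Sum>a<2*k. x a * skew n W (c a) (c b)) mod int d"
    by (simp add: skew_lin_left)
  finally show ?thesis using sfam_pair[OF assms] by simp
qed

lemma sfam_inj:
  assumes "sfam d n W k c"
  shows "inj_on (lmap d n (2*k) c) (zvecs d (2*k))"
proof (rule inj_onI)
  fix x y assume x: "x \<in> zvecs d (2*k)" and y: "y \<in> zvecs d (2*k)"
    and eq: "lmap d n (2*k) c x = lmap d n (2*k) c y"
  show "x = y"
  proof (rule zvecs_ext[OF x y])
    fix a assume a: "a < 2*k"
    have pa: "partner a < 2*k" using partner_lt[OF a] .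
    have "(x a * sgnp a) mod int d = (y a * sgnp a) mod int d"
      using sfam_coord[OF assms pa, of x] sfam_coord[OF assms pa, of y] eq by simp
    then have "x a mod int d = y a mod int d" by (rule sign_cancel)
    then show "x a = y a" using zvecs_mod[OF x a] zvecs_mod[OF y a] by simp
  qed
qed

lemma sfam_bound:
  assumes "d > 1" "sfam d n W k c"
  shows "2*k \<le> n"
proof -
  have "card (zvecs d (2*k)) \<le> card (zvecs d n)"
    by (rule card_inj_on_le[OF sfam_inj[OF assms(2)]]) (use assms lmap_in zvecs_finite in auto)
  then have "d^(2*k) \<le> d^n" by (simp add: zvecs_card)
  then show ?thesis using assms(1) power_le_imp_le_exp by blast
qed

definition proj :: "nat \<Rightarrow> (nat \<Rightarrow> nat \<Rightarrow> int) \<Rightarrow> nat \<Rightarrow> (nat \<Rightarrow> nat \<Rightarrow> int) \<Rightarrow> (nat \<Rightarrow> int) \<Rightarrow> (nat \<Rightarrow> int)" where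
  "proj n W k c v = (\<lambda>i. v i - (\<Sum>a<2*k. (sgnp a * skew n W v (c (partner a))) * c a i))"

lemma proj_orth:
  assumes "sfam d n W k c" "b < 2*k"
  shows "skew n W (proj n W k c v) (c b) mod int d = 0"
proof -
  define Y where "Y = (\<Sum>a<2*k. (sgnp a * skew n W v (c (partner a))) * skew n W (c a) (c b))"
  have 1: "skew n W (proj n W k c v) (c b) = skew n W v (c b) - Y"
    unfolding proj_def Y_def by (simp add: skew_diff_left skew_lin_left)
  have "Y mod int d = (sgnp (partner b) * skew n W v (c (partner (partner b))) * sgnp (partner b)) mod int d"
    unfolding Y_def by (rule sfam_pair[OF assms])
  also have "sgnp (partner b) * skew n W v (c (partner (partner b))) * sgnp (partner b) = skew n W v (c b)"
    by (simp add: mult.commute)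
  finally have 2: "Y mod int d = skew n W v (c b) mod int d" .
  have "(skew n W v (c b) - Y) mod int d = (skew n W v (c b) - skew n W v (c b)) mod int d"
    by (rule mod_diff_cong) (simp_all add: 2)
  then show ?thesis using 1 by simp
qed

lemma proj_orth':
  assumes "sfam d n W k c" "b < 2*k"
  shows "skew n W (c b) (proj n W k c v) mod int d = 0"
proof -
  have "skew n W (c b) (proj n W k c v) = - skew n W (proj n W k c v) (c b)" by (rule skew_antisym)
  then show ?thesis using proj_orth[OF assms, of v] by (simp flip: dvd_eq_mod_eq_0)
qed

lemma exists_nonzero_proj:
  assumes "d > 1" "sfam d n W k c" "2*k < n"
  shows "\<exists>v\<in>zvecs d n. \<exists>i<n. proj n W k c v i mod int d \<noteq> 0"
proof (rule ccontr)
  assume H: "\<not> ?thesis"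
  have "zvecs d n \<subseteq> lmap d n (2*k) c ` zvecs d (2*k)"
  proof
    fix v assume v: "v \<in> zvecs d n"
    define t where "t = (\<lambda>a\<in>{0..<2*k}. (sgnp a * skew n W v (c (partner a))) mod int d)"
    have t: "t \<in> zvecs d (2*k)" unfolding t_def zvecs_def using assms(1) by auto
    have "lmap d n (2*k) c t = v"
    proof (rule zvecs_ext[OF lmap_in v])
      show "0 < d" using assms(1) by simp
      fix i assume i: "i < n"
      have "lmap d n (2*k) c t i = (\<Sum>a<2*k. t a * c a i) mod int d"
        unfolding lmap_def using i by simp
      also have "\<dots> = (\<Sum>a<2*k. (sgnp a * skew n W v (c (partner a))) * c a i) mod int d"
        by (rule sum_mod_cong) (auto simp: t_def mod_mult_left_eq)
      also have "\<dots> = v i mod int d"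
      proof -
        have "proj n W k c v i mod int d = 0" using H v i by auto
        then show ?thesis unfolding proj_def by (simp flip: dvd_eq_mod_eq_0 add: mod_eq_dvd_iff dvd_diff_commute)
      qed
      also have "\<dots> = v i" using zvecs_mod[OF v i] .
      finally show "lmap d n (2*k) c t i = v i" .
    qed
    then show "v \<in> lmap d n (2*k) c ` zvecs d (2*k)" using t by blast
  qed
  then have "card (zvecs d n) \<le> card (lmap d n (2*k) c ` zvecs d (2*k))"
    by (intro card_mono finite_imageI zvecs_finite)
  also have "\<dots> \<le> card (zvecs d (2*k))" by (rule card_image_le[OF zvecs_finite])
  finally have "d^n \<le> d^(2*k)" by (simp add: zvecs_card)
  then have "n \<le> 2*k" using assms(1) power_le_imp_le_exp by blast
  then show False using assms(3) by simp
qed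

lemma mod_inverse_prime:
  fixes g :: int
  assumes "prime d" "g mod int d \<noteq> 0"
  shows "\<exists>h. (g * h) mod int d = 1"
proof -
  have pd: "prime (int d)" using assms(1) by simp
  have "\<not> int d dvd g" using assms(2) by (simp add: dvd_eq_mod_eq_0)
  then have "coprime (int d) g" using prime_imp_coprime[OF pd] by blast
  then have "gcd g (int d) = 1" by (simp add: coprime_iff_gcd_eq_1 gcd.commute)
  then obtain u v where "u * g + v * int d = 1" using bezout_int[of g "int d"] by auto
  then have "(g * u) mod int d = 1 mod int d" by (metis mod_mult_self3 mult.commute add.commute)
  moreover have "1 mod int d = 1" using assms(1) prime_gt_1_nat by auto
  ultimately show ?thesis by auto
qed

lemma mod0_mult: "(x::int) mod m = 0 \<Longrightarrow> (h * x) mod m = 0"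
  by (metis mod_mult_right_eq mult_zero_right mod_0)

lemma mod0_neg: "(x::int) mod m = 0 \<Longrightarrow> (- x) mod m = 0"
  by (simp flip: dvd_eq_mod_eq_0)

lemma sfam_extend:
  assumes "prime d" "full_rank_mod d n (omega_mat d W)" "sfam d n W k c" "2*k < n"
  shows "\<exists>c'. sfam d n W (Suc k) c'"
proof -
  have d1: "d > 1" using assms(1) prime_gt_1_nat by blast
  obtain v i0 where v: "v \<in> zvecs d n" and i0: "i0 < n" and nz: "proj n W k c v i0 mod int d \<noteq> 0"
    using exists_nonzero_proj[OF d1 assms(3,4)] by blast
  define e where "e = proj n W k c v"
  obtain i where i: "i < n" and nz2: "skew n W (uvec i) e mod int d \<noteq> 0"
    using nondeg[OF assms(2) _ i0, of e] nz d1 unfolding e_def by auto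
  define f0 where "f0 = proj n W k c (uvec i)"
  define lam where "lam = (\<lambda>a. sgnp a * skew n W (uvec i) (c (partner a)))"
  have eorth: "skew n W e (c a) mod int d = 0" "skew n W (c a) e mod int d = 0" if "a < 2*k" for a
    unfolding e_def using proj_orth[OF assms(3) that] proj_orth'[OF assms(3) that] by auto
  have f0orth: "skew n W f0 (c a) mod int d = 0" "skew n W (c a) f0 mod int d = 0" if "a < 2*k" for a
    unfolding f0_def using proj_orth[OF assms(3) that] proj_orth'[OF assms(3) that] by auto
  have "skew n W f0 e = skew n W (uvec i) e - (\<Sum>a<2*k. lam a * skew n W (c a) e)"
    unfolding f0_def proj_def lam_def by (simp add: skew_diff_left skew_lin_left)
  moreover have "(\<Sum>a<2*k. lam a * skew n W (c a) e) mod int d = 0"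
  proof -
    have "(\<Sum>a<2*k. lam a * skew n W (c a) e) mod int d = (\<Sum>a<2*k. 0) mod int d"
      by (rule sum_mod_cong) (simp add: mod0_mult eorth)
    then show ?thesis by simp
  qed
  ultimately have "skew n W f0 e mod int d = skew n W (uvec i) e mod int d"
    by (metis diff_zero mod_diff_right_eq)
  then have g0: "skew n W f0 e mod int d \<noteq> 0" using nz2 by simp
  define g where "g = skew n W e f0"
  have "g = - skew n W f0 e" unfolding g_def by (rule skew_antisym)
  then have "g mod int d \<noteq> 0" using g0 mod0_neg[of g "int d"] by auto
  then obtain h where h: "(g * h) mod int d = 1" using mod_inverse_prime[OF assms(1)] by blast
  define f where "f = (\<lambda>j. h * f0 j)"
  have forth: "skew n W f (c a) mod int d = 0" "skew n W (c a) f mod int d = 0" if "a < 2*k" for a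
    unfolding f_def using f0orth[OF that]
    by (simp_all add: skew_smult_left skew_smult_right mod0_mult)
  have ef: "skew n W e f mod int d = 1" unfolding f_def using h
    by (simp add: skew_smult_right g_def mult.commute)
  have fe: "skew n W f e mod int d = (-1) mod int d"
  proof -
    have "skew n W f e = - skew n W e f" by (rule skew_antisym)
    then show ?thesis using ef by (metis mod_minus_eq)
  qed
  define c' where "c' = c(2*k := e, Suc (2*k) := f)"
  have "sfam d n W (Suc k) c'"
    unfolding sfam_def
  proof (intro allI impI)
    fix a b assume a: "a < 2 * Suc k" and b: "b < 2 * Suc k"
    have "a < 2*k \<or> a = 2*k \<or> a = Suc (2*k)" "b < 2*k \<or> b = 2*k \<or> b = Suc (2*k)"
      using a b by (auto simp: less_Suc_eq)
    then have A: "a < 2*k \<or> a = 2*k \<or> a = Suc (2*k)" and B: "b < 2*k \<or> b = 2*k \<or> b = Suc (2*k)"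
      by blast+
    have ca: "c' a = c a" if "a < 2*k" for a using that unfolding c'_def by simp
    have c2: "c' (2*k) = e" "c' (Suc (2*k)) = f" unfolding c'_def by simp_all
    have J1: "Jf a (2*k) = 0" "Jf a (Suc (2*k)) = 0" "Jf (2*k) a = 0" "Jf (Suc (2*k)) a = 0" if "a < 2*k" for a
      using that unfolding Jf_def partner_def by auto presburger+
    have J2: "Jf (2*k) (2*k) = 0" "Jf (2*k) (Suc (2*k)) = 1" "Jf (Suc (2*k)) (2*k) = -1" "Jf (Suc (2*k)) (Suc (2*k)) = 0"
      unfolding Jf_def partner_def sgnp_def by auto
    have "1 mod int d = 1" using d1 by simp
    show "skew n W (c' a) (c' b) mod int d = Jf a b mod int d"
      using A B
    proof (elim disjE)
      assume "a < 2*k" "b < 2*k" then show ?thesis using assms(3) unfolding sfam_def by (simp add: ca)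
    next
      assume "a < 2*k" "b = 2*k" then show ?thesis using eorth J1 by (simp add: ca c2)
    next
      assume "a < 2*k" "b = Suc (2*k)" then show ?thesis using forth J1 by (simp add: ca c2)
    next
      assume "a = 2*k" "b < 2*k" then show ?thesis using eorth J1 by (simp add: ca c2)
    next
      assume "a = 2*k" "b = 2*k" then show ?thesis using J2 by (simp add: c2 skew_self)
    next
      assume "a = 2*k" "b = Suc (2*k)" then show ?thesis using J2 ef \<open>1 mod int d = 1\<close> by (simp add: c2)
    next
      assume "a = Suc (2*k)" "b < 2*k" then show ?thesis using forth J1 by (simp add: ca c2)
    next
      assume "a = Suc (2*k)" "b = 2*k" then show ?thesis using J2 fe by (simp add: c2)
    next
      assume "a = Suc (2*k)" "b = Suc (2*k)" then show ?thesis using J2 by (simp add: c2 skew_self)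
    qed
  qed
  then show ?thesis by blast
qed

lemma sfam_exists:
  assumes "prime d" "full_rank_mod d n (omega_mat d W)"
  shows "2*k \<le> n \<Longrightarrow> \<exists>c. sfam d n W k c"
proof (induction k)
  case 0
  then show ?case unfolding sfam_def by auto
next
  case (Suc k)
  then obtain c where "sfam d n W k c" by auto
  then show ?case using sfam_extend[OF assms] Suc.prems by auto
qed

lemma sfam_full:
  assumes "prime d" "full_rank_mod d n (omega_mat d W)"
  shows "even n \<and> (\<exists>c. sfam d n W (n div 2) c)"
proof -
  have d1: "d > 1" using assms(1) prime_gt_1_nat by blast
  have "even n"
  proof (rule ccontr)
    assume "odd n"
    then have "2 * (n div 2) < n" by presburger
    moreover obtain c where "sfam d n W (n div 2) c" using sfam_exists[OF assms, of "n div 2"] by auto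
    ultimately obtain c' where "sfam d n W (Suc (n div 2)) c'" using sfam_extend[OF assms] by blast
    then have "2 * Suc (n div 2) \<le> n" using sfam_bound[OF d1] by blast
    then show False by simp
  qed
  then show ?thesis using sfam_exists[OF assms, of "n div 2"] by auto
qed

definition vadd :: "nat \<Rightarrow> nat \<Rightarrow> (nat \<Rightarrow> int) \<Rightarrow> (nat \<Rightarrow> int) \<Rightarrow> (nat \<Rightarrow> int)" where
  "vadd d n x y = (\<lambda>i\<in>{0..<n}. (x i + y i) mod int d)"

lemma vadd_in: "d > 0 \<Longrightarrow> vadd d n x y \<in> zvecs d n"
  unfolding vadd_def zvecs_def by auto

lemma polar_mult:
  "(a, p, x) \<otimes>\<^bsub>polar_group d n A \<zeta> F W\<^esub> (b, q, y) =
    (rep_r A d \<zeta> F (a \<otimes>\<^bsub>A\<^esub> b), (rep_u A d \<zeta> F (a \<otimes>\<^bsub>A\<^esub> b) + p + q + bilin n W x y) mod int d, vadd d n x y)"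
  unfolding polar_group_def vadd_def by simp

lemma polar_carrier: "carrier (polar_group d n A \<zeta> F W) = F \<times> {0..<int d} \<times> zvecs d n"
  unfolding polar_group_def by simp

lemma lmap_add:
  assumes "x \<in> zvecs d N" "y \<in> zvecs d N"
  shows "lmap d n N c (vadd d N x y) = vadd d n (lmap d n N c x) (lmap d n N c y)"
proof
  fix i
  show "lmap d n N c (vadd d N x y) i = vadd d n (lmap d n N c x) (lmap d n N c y) i"
  proof (cases "i < n")
    case True
    have "(\<Sum>a<N. vadd d N x y a * c a i) mod int d = (\<Sum>a<N. (x a + y a) * c a i) mod int d"
      by (rule sum_mod_cong) (auto simp: vadd_def mod_mult_left_eq)
    also have "\<dots> = ((\<Sum>a<N. x a * c a i) mod int d + (\<Sum>a<N. y a * c a i) mod int d) mod int d"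
      by (simp add: distrib_right sum.distrib mod_add_eq)
    finally show ?thesis using True unfolding lmap_def vadd_def by simp
  next
    case False then show ?thesis unfolding lmap_def vadd_def by simp
  qed
qed

lemma lmap_bij:
  assumes "d > 1" "even n" "sfam d n W (n div 2) c"
  shows "bij_betw (lmap d n n c) (zvecs d n) (zvecs d n)"
proof -
  have n: "2 * (n div 2) = n" using assms(2) by simp
  have inj: "inj_on (lmap d n n c) (zvecs d n)" using sfam_inj[OF assms(3)] n by simp
  have sub: "lmap d n n c ` zvecs d n \<subseteq> zvecs d n" using lmap_in assms(1) by auto
  have "lmap d n n c ` zvecs d n = zvecs d n" by (rule endo_inj_surj[OF zvecs_finite sub inj])
  then show ?thesis using inj unfolding bij_betw_def by simp
qed

locale pc_setup =
  fixes d :: nat and A :: "('a, 'b) monoid_scheme" and \<zeta> :: "int \<Rightarrow> 'a" and F :: "'a set"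
  assumes d1: "d > 1"
    and cg: "comm_group A"
    and zhom: "\<zeta> \<in> hom (integer_mod_group d) A" and zinj: "inj_on \<zeta> {0..<int d}"
    and tr: "is_transversal A d \<zeta> F"
begin

interpretation A: comm_group A by (rule cg)

definition Z :: "int \<Rightarrow> 'a" where "Z k = \<zeta> (k mod int d)"

lemma zeta_carrier: "k \<in> {0..<int d} \<Longrightarrow> \<zeta> k \<in> carrier A"
  using zhom d1 unfolding hom_def by (auto simp: carrier_integer_mod_group)

lemma zeta_mult: "k \<in> {0..<int d} \<Longrightarrow> l \<in> {0..<int d} \<Longrightarrow> \<zeta> k \<otimes>\<^bsub>A\<^esub> \<zeta> l = \<zeta> ((k + l) mod int d)"
  using zhom d1 unfolding hom_def by (auto simp: carrier_integer_mod_group)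

lemma Z_carrier[simp]: "Z k \<in> carrier A"
  unfolding Z_def using d1 by (intro zeta_carrier) auto

lemma Z_add: "Z (k + l) = Z k \<otimes>\<^bsub>A\<^esub> Z l"
  unfolding Z_def using d1 by (subst zeta_mult) (auto simp: mod_add_eq)

lemma Z_zeta: "k \<in> {0..<int d} \<Longrightarrow> \<zeta> k = Z k"
  unfolding Z_def by simp

lemma Z_mod: "Z (k mod int d) = Z k"
  unfolding Z_def by simp

lemma F_sub: "F \<subseteq> carrier A" using tr unfolding is_transversal_def by simp

lemma rep_props:
  assumes "a \<in> carrier A"
  shows "rep_r A d \<zeta> F a \<in> F" "rep_u A d \<zeta> F a \<in> {0..<int d}"
    "a = rep_r A d \<zeta> F a \<otimes>\<^bsub>A\<^esub> \<zeta> (rep_u A d \<zeta> F a)"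
proof -
  have ex1: "\<exists>!f. f \<in> F \<and> (\<exists>k \<in> {0..<int d}. a = f \<otimes>\<^bsub>A\<^esub> \<zeta> k)"
    using tr assms unfolding is_transversal_def by blast
  have r: "rep_r A d \<zeta> F a \<in> F \<and> (\<exists>k \<in> {0..<int d}. a = rep_r A d \<zeta> F a \<otimes>\<^bsub>A\<^esub> \<zeta> k)"
    unfolding rep_r_def by (rule theI'[OF ex1])
  have ex2: "\<exists>!k. k \<in> {0..<int d} \<and> a = rep_r A d \<zeta> F a \<otimes>\<^bsub>A\<^esub> \<zeta> k"
  proof -
    obtain k where k: "k \<in> {0..<int d}" "a = rep_r A d \<zeta> F a \<otimes>\<^bsub>A\<^esub> \<zeta> k" using r by blast
    moreover have "k' = k" if "k' \<in> {0..<int d}" "a = rep_r A d \<zeta> F a \<otimes>\<^bsub>A\<^esub> \<zeta> k'" for k'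
    proof -
      have "\<zeta> k' = \<zeta> k"
        using k that r F_sub zeta_carrier A.Units_l_cancel A.Units_eq by (metis subsetD)
      then show ?thesis using zinj k that unfolding inj_on_def by blast
    qed
    ultimately show ?thesis by blast
  qed
  have u: "rep_u A d \<zeta> F a \<in> {0..<int d} \<and> a = rep_r A d \<zeta> F a \<otimes>\<^bsub>A\<^esub> \<zeta> (rep_u A d \<zeta> F a)"
    unfolding rep_u_def by (rule theI'[OF ex2])
  show "rep_r A d \<zeta> F a \<in> F" using r by blast
  show "rep_u A d \<zeta> F a \<in> {0..<int d}" "a = rep_r A d \<zeta> F a \<otimes>\<^bsub>A\<^esub> \<zeta> (rep_u A d \<zeta> F a)" using u by blast+
qed

lemma rep_unique:
  assumes "f \<in> F" "k \<in> {0..<int d}" "a = f \<otimes>\<^bsub>A\<^esub> \<zeta> k"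
  shows "rep_r A d \<zeta> F a = f" "rep_u A d \<zeta> F a = k"
proof -
  have fc: "f \<in> carrier A" using assms(1) F_sub by blast
  have ac: "a \<in> carrier A" using assms fc zeta_carrier by simp
  have ex1: "\<exists>!f. f \<in> F \<and> (\<exists>k \<in> {0..<int d}. a = f \<otimes>\<^bsub>A\<^esub> \<zeta> k)"
    using tr ac unfolding is_transversal_def by blast
  show rr: "rep_r A d \<zeta> F a = f"
    using ex1 rep_props[OF ac] assms by blast
  have "\<zeta> (rep_u A d \<zeta> F a) = \<zeta> k"
    using rep_props[OF ac] assms rr fc zeta_carrier A.Units_l_cancel A.Units_eq by metis
  then show "rep_u A d \<zeta> F a = k" using zinj rep_props[OF ac] assms(2) unfolding inj_on_def by blast
qed

end

context pc_setup
begin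

interpretation A: comm_group A by (rule cg)

abbreviation "R \<equiv> rep_r A d \<zeta> F"
abbreviation "U \<equiv> rep_u A d \<zeta> F"

lemma RU: "a \<in> carrier A \<Longrightarrow> R a \<otimes>\<^bsub>A\<^esub> Z (U a) = a"
proof -
  assume a: "a \<in> carrier A"
  have e: "R a \<otimes>\<^bsub>A\<^esub> \<zeta> (U a) = a" using rep_props(3)[OF a] by (rule sym)
  have z: "Z (U a) = \<zeta> (U a)" using Z_zeta[OF rep_props(2)[OF a]] by (rule sym)
  show ?thesis by (simp only: z e)
qed

lemma R_carrier: "a \<in> carrier A \<Longrightarrow> R a \<in> carrier A"
  using rep_props(1) F_sub by blast

lemma iso_crit:
  assumes bij: "bij_betw \<psi> (zvecs d n) (zvecs d n)"
    and add: "\<And>x y. x \<in> zvecs d n \<Longrightarrow> y \<in> zvecs d n \<Longrightarrow> \<psi> (vadd d n x y) = vadd d n (\<psi> x) (\<psi> y)"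
    and phi: "\<And>x. x \<in> zvecs d n \<Longrightarrow> \<phi> x \<in> carrier A"
    and eq: "\<And>x y. x \<in> zvecs d n \<Longrightarrow> y \<in> zvecs d n \<Longrightarrow>
       \<phi> (vadd d n x y) \<otimes>\<^bsub>A\<^esub> Z (bilin n W1 x y) = \<phi> x \<otimes>\<^bsub>A\<^esub> \<phi> y \<otimes>\<^bsub>A\<^esub> Z (bilin n W2 (\<psi> x) (\<psi> y))"
  shows "polar_group d n A \<zeta> F W1 \<cong> polar_group d n A \<zeta> F W2"
proof -
  let ?G1 = "polar_group d n A \<zeta> F W1" and ?G2 = "polar_group d n A \<zeta> F W2"
  have d0: "d > 0" using d1 by simp
  define h where "h = (\<lambda>(a, p, x). (R (a \<otimes>\<^bsub>A\<^esub> \<zeta> p \<otimes>\<^bsub>A\<^esub> \<phi> x), U (a \<otimes>\<^bsub>A\<^esub> \<zeta> p \<otimes>\<^bsub>A\<^esub> \<phi> x), \<psi> x))"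
  define \<psi>' where "\<psi>' = inv_into (zvecs d n) \<psi>"
  define h' where "h' = (\<lambda>(a, p, y). (R (a \<otimes>\<^bsub>A\<^esub> \<zeta> p \<otimes>\<^bsub>A\<^esub> inv\<^bsub>A\<^esub> \<phi> (\<psi>' y)),
       U (a \<otimes>\<^bsub>A\<^esub> \<zeta> p \<otimes>\<^bsub>A\<^esub> inv\<^bsub>A\<^esub> \<phi> (\<psi>' y)), \<psi>' y))"
  have psi_in: "\<psi> x \<in> zvecs d n" if "x \<in> zvecs d n" for x
    by (rule bij_betw_apply[OF bij that])
  have psi'_in: "\<psi>' y \<in> zvecs d n" if "y \<in> zvecs d n" for y
    unfolding \<psi>'_def by (rule inv_into_into) (use bij that in \<open>simp add: bij_betw_def\<close>)
  have psi'_psi: "\<psi>' (\<psi> x) = x" if "x \<in> zvecs d n" for x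
    unfolding \<psi>'_def by (rule inv_into_f_f[OF bij_betw_imp_inj_on[OF bij] that])
  have psi_psi': "\<psi> (\<psi>' y) = y" if "y \<in> zvecs d n" for y
    unfolding \<psi>'_def by (rule f_inv_into_f[where A="zvecs d n"]) (use bij that in \<open>simp add: bij_betw_def\<close>)
  have Fc: "a \<in> F \<Longrightarrow> a \<in> carrier A" for a using F_sub by blast
  have zc: "p \<in> {0..<int d} \<Longrightarrow> \<zeta> p \<in> carrier A" for p using zeta_carrier by blast
  have hom: "h \<in> hom ?G1 ?G2"
  proof (rule homI)
    fix g assume "g \<in> carrier ?G1"
    then obtain a p x where g: "g = (a, p, x)" "a \<in> F" "p \<in> {0..<int d}" "x \<in> zvecs d n"
      by (auto simp: polar_carrier)
    have "a \<otimes>\<^bsub>A\<^esub> \<zeta> p \<otimes>\<^bsub>A\<^esub> \<phi> x \<in> carrier A" using g Fc zc phi by simp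
    then show "h g \<in> carrier ?G2" unfolding h_def using g rep_props psi_in by (simp add: polar_carrier)
  next
    fix g g' assume "g \<in> carrier ?G1" "g' \<in> carrier ?G1"
    then obtain a p x b q y where g: "g = (a, p, x)" "a \<in> F" "p \<in> {0..<int d}" "x \<in> zvecs d n"
      and g': "g' = (b, q, y)" "b \<in> F" "q \<in> {0..<int d}" "y \<in> zvecs d n"
      by (auto simp: polar_carrier)
    have ac: "a \<in> carrier A" "b \<in> carrier A" using g g' Fc by auto
    have px: "\<phi> x \<in> carrier A" "\<phi> y \<in> carrier A" "\<phi> (vadd d n x y) \<in> carrier A"
      using phi g g' vadd_in d0 by auto
    define \<alpha> where "\<alpha> = a \<otimes>\<^bsub>A\<^esub> \<zeta> p \<otimes>\<^bsub>A\<^esub> \<phi> x"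
    define \<beta> where "\<beta> = b \<otimes>\<^bsub>A\<^esub> \<zeta> q \<otimes>\<^bsub>A\<^esub> \<phi> y"
    have zp: "\<zeta> p = Z p" "\<zeta> q = Z q" using g g' Z_zeta by auto
    have abc: "\<alpha> \<in> carrier A" "\<beta> \<in> carrier A" unfolding \<alpha>_def \<beta>_def using ac px zp by auto
    define B2 where "B2 = bilin n W2 (\<psi> x) (\<psi> y)"
    define \<gamma> where "\<gamma> = R (a \<otimes>\<^bsub>A\<^esub> b) \<otimes>\<^bsub>A\<^esub> \<zeta> ((U (a \<otimes>\<^bsub>A\<^esub> b) + p + q + bilin n W1 x y) mod int d)
       \<otimes>\<^bsub>A\<^esub> \<phi> (vadd d n x y)"
    define K where "K = (U (R \<alpha> \<otimes>\<^bsub>A\<^esub> R \<beta>) + U \<alpha> + U \<beta> + B2) mod int d"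
    have abR: "R \<alpha> \<otimes>\<^bsub>A\<^esub> R \<beta> \<in> carrier A" using abc R_carrier by simp
    have zm: "\<zeta> (k mod int d) = Z k" for k by (simp add: Z_def)
    have Rab: "R (a \<otimes>\<^bsub>A\<^esub> b) \<in> carrier A" using ac R_carrier by simp
    have RaRb: "R \<alpha> \<in> carrier A" "R \<beta> \<in> carrier A" "R (R \<alpha> \<otimes>\<^bsub>A\<^esub> R \<beta>) \<in> carrier A"
      using abc abR R_carrier by auto
    have "\<gamma> = R (a \<otimes>\<^bsub>A\<^esub> b) \<otimes>\<^bsub>A\<^esub> (Z (U (a \<otimes>\<^bsub>A\<^esub> b)) \<otimes>\<^bsub>A\<^esub> Z p \<otimes>\<^bsub>A\<^esub> Z q \<otimes>\<^bsub>A\<^esub> Z (bilin n W1 x y))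
       \<otimes>\<^bsub>A\<^esub> \<phi> (vadd d n x y)"
      unfolding \<gamma>_def zm by (simp only: Z_add)
    also have "\<dots> = (R (a \<otimes>\<^bsub>A\<^esub> b) \<otimes>\<^bsub>A\<^esub> Z (U (a \<otimes>\<^bsub>A\<^esub> b))) \<otimes>\<^bsub>A\<^esub> Z p \<otimes>\<^bsub>A\<^esub> Z q
        \<otimes>\<^bsub>A\<^esub> (\<phi> (vadd d n x y) \<otimes>\<^bsub>A\<^esub> Z (bilin n W1 x y))"
      using Rab px by (simp add: A.m_ac)
    also have "\<dots> = a \<otimes>\<^bsub>A\<^esub> b \<otimes>\<^bsub>A\<^esub> Z p \<otimes>\<^bsub>A\<^esub> Z q \<otimes>\<^bsub>A\<^esub> (\<phi> x \<otimes>\<^bsub>A\<^esub> \<phi> y \<otimes>\<^bsub>A\<^esub> Z B2)"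
      unfolding RU[OF A.m_closed[OF ac]] eq[OF g(4) g'(4)] B2_def ..
    also have "\<dots> = \<alpha> \<otimes>\<^bsub>A\<^esub> \<beta> \<otimes>\<^bsub>A\<^esub> Z B2"
      unfolding \<alpha>_def \<beta>_def zp using ac px by (simp add: A.m_ac)
    also have "\<dots> = (R \<alpha> \<otimes>\<^bsub>A\<^esub> Z (U \<alpha>)) \<otimes>\<^bsub>A\<^esub> (R \<beta> \<otimes>\<^bsub>A\<^esub> Z (U \<beta>)) \<otimes>\<^bsub>A\<^esub> Z B2"
      unfolding RU[OF abc(1)] RU[OF abc(2)] ..
    also have "\<dots> = (R \<alpha> \<otimes>\<^bsub>A\<^esub> R \<beta>) \<otimes>\<^bsub>A\<^esub> Z (U \<alpha>) \<otimes>\<^bsub>A\<^esub> Z (U \<beta>) \<otimes>\<^bsub>A\<^esub> Z B2"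
      using RaRb by (simp add: A.m_ac)
    also have "\<dots> = (R (R \<alpha> \<otimes>\<^bsub>A\<^esub> R \<beta>) \<otimes>\<^bsub>A\<^esub> Z (U (R \<alpha> \<otimes>\<^bsub>A\<^esub> R \<beta>))) \<otimes>\<^bsub>A\<^esub> Z (U \<alpha>) \<otimes>\<^bsub>A\<^esub> Z (U \<beta>) \<otimes>\<^bsub>A\<^esub> Z B2"
      unfolding RU[OF abR] ..
    also have "\<dots> = R (R \<alpha> \<otimes>\<^bsub>A\<^esub> R \<beta>) \<otimes>\<^bsub>A\<^esub> (Z (U (R \<alpha> \<otimes>\<^bsub>A\<^esub> R \<beta>)) \<otimes>\<^bsub>A\<^esub> Z (U \<alpha>) \<otimes>\<^bsub>A\<^esub> Z (U \<beta>) \<otimes>\<^bsub>A\<^esub> Z B2)"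
      using RaRb by (simp add: A.m_ac)
    also have "\<dots> = R (R \<alpha> \<otimes>\<^bsub>A\<^esub> R \<beta>) \<otimes>\<^bsub>A\<^esub> \<zeta> K"
      unfolding K_def zm by (simp only: Z_add)
    finally have geq: "\<gamma> = R (R \<alpha> \<otimes>\<^bsub>A\<^esub> R \<beta>) \<otimes>\<^bsub>A\<^esub> \<zeta> K" .
    have Kin: "K \<in> {0..<int d}" unfolding K_def using d0 by simp
    have RRin: "R (R \<alpha> \<otimes>\<^bsub>A\<^esub> R \<beta>) \<in> F" using rep_props(1)[OF abR] .
    have "h (g \<otimes>\<^bsub>?G1\<^esub> g') = (R \<gamma>, U \<gamma>, \<psi> (vadd d n x y))"
      unfolding g g' h_def \<gamma>_def by (simp add: polar_mult)
    also have "\<dots> = (R (R \<alpha> \<otimes>\<^bsub>A\<^esub> R \<beta>), K, vadd d n (\<psi> x) (\<psi> y))"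
      using rep_unique[OF RRin Kin geq] add[OF g(4) g'(4)] by simp
    also have "\<dots> = h g \<otimes>\<^bsub>?G2\<^esub> h g'"
      unfolding g g' h_def K_def B2_def \<alpha>_def \<beta>_def by (simp add: polar_mult)
    finally show "h (g \<otimes>\<^bsub>?G1\<^esub> g') = h g \<otimes>\<^bsub>?G2\<^esub> h g'" .
  qed
  have bij2: "bij_betw h (carrier ?G1) (carrier ?G2)"
  proof (rule bij_betw_byWitness[where f' = h'])
    show "\<forall>g\<in>carrier ?G1. h' (h g) = g"
    proof
      fix g assume "g \<in> carrier ?G1"
      then obtain a p x where g: "g = (a, p, x)" "a \<in> F" "p \<in> {0..<int d}" "x \<in> zvecs d n"
        by (auto simp: polar_carrier)
      define \<alpha> where "\<alpha> = a \<otimes>\<^bsub>A\<^esub> \<zeta> p \<otimes>\<^bsub>A\<^esub> \<phi> x"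
      have ac: "a \<in> carrier A" "\<zeta> p \<in> carrier A" "\<phi> x \<in> carrier A" using g Fc zc phi by auto
      have "\<alpha> \<in> carrier A" unfolding \<alpha>_def using ac by simp
      then have "R \<alpha> \<otimes>\<^bsub>A\<^esub> \<zeta> (U \<alpha>) \<otimes>\<^bsub>A\<^esub> inv\<^bsub>A\<^esub> \<phi> x = a \<otimes>\<^bsub>A\<^esub> \<zeta> p"
        using rep_props(3)[of \<alpha>] ac unfolding \<alpha>_def by (simp add: A.m_assoc)
      then have "R (R \<alpha> \<otimes>\<^bsub>A\<^esub> \<zeta> (U \<alpha>) \<otimes>\<^bsub>A\<^esub> inv\<^bsub>A\<^esub> \<phi> x) = a"
          "U (R \<alpha> \<otimes>\<^bsub>A\<^esub> \<zeta> (U \<alpha>) \<otimes>\<^bsub>A\<^esub> inv\<^bsub>A\<^esub> \<phi> x) = p"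
        using rep_unique[OF g(2,3)] by auto
      then show "h' (h g) = g" unfolding h_def h'_def g using psi'_psi[OF g(4)] \<alpha>_def by simp
    qed
  next
    show "\<forall>g\<in>carrier ?G2. h (h' g) = g"
    proof
      fix g assume "g \<in> carrier ?G2"
      then obtain a p y where g: "g = (a, p, y)" "a \<in> F" "p \<in> {0..<int d}" "y \<in> zvecs d n"
        by (auto simp: polar_carrier)
      define x where "x = \<psi>' y"
      have x: "x \<in> zvecs d n" "\<psi> x = y" unfolding x_def using psi'_in psi_psi' g by auto
      define \<alpha> where "\<alpha> = a \<otimes>\<^bsub>A\<^esub> \<zeta> p \<otimes>\<^bsub>A\<^esub> inv\<^bsub>A\<^esub> \<phi> x"
      have ac: "a \<in> carrier A" "\<zeta> p \<in> carrier A" "\<phi> x \<in> carrier A" using g Fc zc phi x by auto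
      have "\<alpha> \<in> carrier A" unfolding \<alpha>_def using ac by simp
      then have "R \<alpha> \<otimes>\<^bsub>A\<^esub> \<zeta> (U \<alpha>) \<otimes>\<^bsub>A\<^esub> \<phi> x = a \<otimes>\<^bsub>A\<^esub> \<zeta> p"
        using rep_props(3)[of \<alpha>] ac unfolding \<alpha>_def by (simp add: A.m_assoc)
      then have "R (R \<alpha> \<otimes>\<^bsub>A\<^esub> \<zeta> (U \<alpha>) \<otimes>\<^bsub>A\<^esub> \<phi> x) = a"
          "U (R \<alpha> \<otimes>\<^bsub>A\<^esub> \<zeta> (U \<alpha>) \<otimes>\<^bsub>A\<^esub> \<phi> x) = p"
        using rep_unique[OF g(2,3)] by auto
      then show "h (h' g) = g" unfolding h_def h'_def g using x \<alpha>_def x_def by simp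
    qed
  next
    show "h ` carrier ?G1 \<subseteq> carrier ?G2" using hom unfolding hom_def by auto
  next
    show "h' ` carrier ?G2 \<subseteq> carrier ?G1"
    proof
      fix g' assume "g' \<in> h' ` carrier ?G2"
      then obtain a p y where g: "g' = h' (a, p, y)" "a \<in> F" "p \<in> {0..<int d}" "y \<in> zvecs d n"
        by (auto simp: polar_carrier)
      have "a \<otimes>\<^bsub>A\<^esub> \<zeta> p \<otimes>\<^bsub>A\<^esub> inv\<^bsub>A\<^esub> \<phi> (\<psi>' y) \<in> carrier A"
        using g Fc zc phi psi'_in by simp
      then show "g' \<in> carrier ?G1" unfolding g h'_def using rep_props psi'_in g(4) by (simp add: polar_carrier)
    qed
  qed
  show ?thesis unfolding is_iso_def iso_def using hom bij2 by blast
qed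

end

lemma bilin_ext:
  assumes "\<And>i. i < n \<Longrightarrow> x i = x' i" "\<And>i. i < n \<Longrightarrow> y i = y' i"
  shows "bilin n W x y = bilin n W x' y'"
  unfolding bilin_def using assms by (intro sum.cong) auto

lemma bilin_sym:
  assumes "\<And>i j. S i j = S j i"
  shows "bilin n S x y = bilin n S y x"
  unfolding bilin_def
  apply (subst sum.swap)
  apply (simp_all add: assms mult.commute mult.left_commute)
  done

lemma bilin_add_mat: "bilin n S x y + bilin n T x y = bilin n (\<lambda>i j. S i j + T i j) x y"
  unfolding bilin_def by (simp add: sum.distrib[symmetric] algebra_simps)

lemma bilin_quad:
  fixes m :: int
  assumes "\<And>i. i < n \<Longrightarrow> z i = x i + y i - m * w i"
  shows "bilin n S z z = bilin n S x x + bilin n S y y + bilin n S x y + bilin n S y x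
     - m * (bilin n S x w + bilin n S w x + bilin n S y w + bilin n S w y) + m * m * bilin n S w w"
proof -
  have "bilin n S z z = (\<Sum>i<n. \<Sum>j<n. (x i + y i - m * w i) * S i j * (x j + y j - m * w j))"
    unfolding bilin_def using assms by (intro sum.cong) auto
  also have "\<dots> = (\<Sum>i<n. \<Sum>j<n. x i * S i j * x j + y i * S i j * y j + x i * S i j * y j + y i * S i j * x j
     - m * (x i * S i j * w j + w i * S i j * x j + y i * S i j * w j + w i * S i j * y j) + m * m * (w i * S i j * w j))"
    by (intro sum.cong) (auto simp: algebra_simps)
  also have "\<dots> = bilin n S x x + bilin n S y y + bilin n S x y + bilin n S y x
     - m * (bilin n S x w + bilin n S w x + bilin n S y w + bilin n S w y) + m * m * bilin n S w w"
    unfolding bilin_def by (simp add: sum.distrib sum_subtractf sum_distrib_left distrib_left)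
  finally show ?thesis .
qed

definition WJ :: "nat \<Rightarrow> nat \<Rightarrow> int" where
  "WJ a b = (if even a \<and> b = Suc a then 1 else 0)"

lemma WJ_skew: "WJ a b - WJ b a = Jf a b"
  unfolding WJ_def Jf_def partner_def sgnp_def by auto

context pc_setup
begin

interpretation A: comm_group A by (rule cg)

lemma zeta0: "\<zeta> 0 = \<one>\<^bsub>A\<^esub>"
  using hom_one[OF zhom group_integer_mod_group A.is_group] by simp

lemma Z0: "Z 0 = \<one>\<^bsub>A\<^esub>" unfolding Z_def using zeta0 by simp

lemma Z_dvd: "Z (k * int d) = \<one>\<^bsub>A\<^esub>" using Z0 Z_mod[of "k * int d"] Z_mod[of 0] by simp

lemma zeta1_nat: "\<zeta> 1 [^]\<^bsub>A\<^esub> (m::nat) = Z (int m)"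
proof (induction m)
  case 0 then show ?case using Z0 by simp
next
  case (Suc m)
  have "\<zeta> 1 = Z 1" using d1 Z_zeta by simp
  then show ?case using Suc by (simp add: Z_add A.m_comm)
qed

lemma zeta1_int: "\<zeta> 1 [^]\<^bsub>A\<^esub> (k::int) = Z k"
proof -
  have z1: "\<zeta> 1 \<in> carrier A" using d1 zeta_carrier by simp
  have k: "k mod int d + int d * (k div int d) = k" by simp
  have "\<zeta> 1 [^]\<^bsub>A\<^esub> (k mod int d + int d * (k div int d)) = \<zeta> 1 [^]\<^bsub>A\<^esub> (k mod int d) \<otimes>\<^bsub>A\<^esub> (\<zeta> 1 [^]\<^bsub>A\<^esub> int d) [^]\<^bsub>A\<^esub> (k div int d)"
    using z1 by (simp only: A.int_pow_mult A.int_pow_pow)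
  then have "\<zeta> 1 [^]\<^bsub>A\<^esub> k = \<zeta> 1 [^]\<^bsub>A\<^esub> (k mod int d) \<otimes>\<^bsub>A\<^esub> (\<zeta> 1 [^]\<^bsub>A\<^esub> int d) [^]\<^bsub>A\<^esub> (k div int d)"
    by (simp only: k)
  also have "\<zeta> 1 [^]\<^bsub>A\<^esub> int d = \<one>\<^bsub>A\<^esub>"
    using zeta1_nat[of d] Z_dvd[of 1] by (simp add: int_pow_int)
  also have "\<zeta> 1 [^]\<^bsub>A\<^esub> (k mod int d) = Z (k mod int d)"
  proof -
    have "k mod int d = int (nat (k mod int d))" using d1 by simp
    then show ?thesis by (metis zeta1_nat int_pow_int)
  qed
  finally show ?thesis using Z_mod by simp
qed

lemma sqrt_pow:
  assumes b: "b \<in> carrier A" "b \<otimes>\<^bsub>A\<^esub> b = \<zeta> 1"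
  shows "b [^]\<^bsub>A\<^esub> (2 * j) = Z j"
proof -
  have "b [^]\<^bsub>A\<^esub> (2::int) = b [^]\<^bsub>A\<^esub> (2::nat)"
    using int_pow_int[where x=b and G=A and n=2] by simp
  also have "\<dots> = b \<otimes>\<^bsub>A\<^esub> b" using b by (simp add: numeral_2_eq_2 A.nat_pow_Suc)
  finally have "b [^]\<^bsub>A\<^esub> (2::int) = b \<otimes>\<^bsub>A\<^esub> b" .
  then have "b [^]\<^bsub>A\<^esub> (2 * j) = \<zeta> 1 [^]\<^bsub>A\<^esub> j" using b A.int_pow_pow[of b 2 j] by simp
  then show ?thesis using zeta1_int by simp
qed

definition tt :: "'a \<Rightarrow> 'a" where "tt b = b [^]\<^bsub>A\<^esub> (int d + 1)"

lemma tt_props: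
  assumes b: "b \<in> carrier A" "b \<otimes>\<^bsub>A\<^esub> b = \<zeta> 1"
  shows "tt b \<in> carrier A" "tt b [^]\<^bsub>A\<^esub> (2 * k) = Z k" "tt b [^]\<^bsub>A\<^esub> (int d * int d) = \<one>\<^bsub>A\<^esub>"
proof -
  show "tt b \<in> carrier A" unfolding tt_def using b by simp
  have "tt b [^]\<^bsub>A\<^esub> (2 * k) = b [^]\<^bsub>A\<^esub> (2 * ((int d + 1) * k))"
    unfolding tt_def using b A.int_pow_pow by (simp add: algebra_simps)
  also have "\<dots> = Z ((int d + 1) * k)" by (rule sqrt_pow[OF b])
  also have "\<dots> = Z k"
  proof -
    have "((int d + 1) * k) mod int d = k mod int d" by (simp add: algebra_simps)
    then show ?thesis by (metis Z_mod)
  qed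
  finally show "tt b [^]\<^bsub>A\<^esub> (2 * k) = Z k" .
  obtain q where q: "(int d + 1) * int d = 2 * q" by (metis even_mult_iff even_add odd_one dvd_def)
  have "tt b [^]\<^bsub>A\<^esub> (int d * int d) = b [^]\<^bsub>A\<^esub> (2 * (q * int d))"
    unfolding tt_def using b A.int_pow_pow q by (metis mult.assoc)
  also have "\<dots> = Z (q * int d)" by (rule sqrt_pow[OF b])
  finally show "tt b [^]\<^bsub>A\<^esub> (int d * int d) = \<one>\<^bsub>A\<^esub>" using Z_dvd by simp
qed

lemma phi_add:
  assumes b: "b \<in> carrier A" "b \<otimes>\<^bsub>A\<^esub> b = \<zeta> 1"
    and S: "\<And>i j. S i j = S j i"
    and x: "x \<in> zvecs d n" and y: "y \<in> zvecs d n"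
  shows "tt b [^]\<^bsub>A\<^esub> bilin n S (vadd d n x y) (vadd d n x y)
     = tt b [^]\<^bsub>A\<^esub> bilin n S x x \<otimes>\<^bsub>A\<^esub> tt b [^]\<^bsub>A\<^esub> bilin n S y y \<otimes>\<^bsub>A\<^esub> Z (bilin n S x y)"
proof -
  define w where "w = (\<lambda>i. (x i + y i) div int d)"
  have z: "vadd d n x y i = x i + y i - int d * w i" if "i < n" for i
    unfolding vadd_def w_def using that by (simp add: minus_div_mult_eq_mod[symmetric])
  define B where "B = bilin n S x y"
  define C where "C = bilin n S x w + bilin n S y w"
  have e: "bilin n S (vadd d n x y) (vadd d n x y) = bilin n S x x + bilin n S y y + 2 * (B - int d * C)
      + (int d * int d) * bilin n S w w"
    unfolding B_def C_def using bilin_quad[where n=n and z="vadd d n x y" and x=x and y=y and m="int d" and w=w and S=S, OF z]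
      bilin_sym[where S=S and n=n and x=y and y=x, OF S] bilin_sym[where S=S and n=n and x=w and y=x, OF S]
      bilin_sym[where S=S and n=n and x=w and y=y, OF S]
    by (simp add: algebra_simps)
  have t: "tt b \<in> carrier A" "\<And>k. tt b [^]\<^bsub>A\<^esub> (2 * k) = Z k"
      "tt b [^]\<^bsub>A\<^esub> (int d * int d) = \<one>\<^bsub>A\<^esub>" using tt_props[OF b] by auto
  have ZB: "Z (B - int d * C) = Z B"
  proof -
    have "(B - int d * C) mod int d = B mod int d" by (simp add: mod_eq_dvd_iff)
    then show ?thesis by (metis Z_mod)
  qed
  have w1: "tt b [^]\<^bsub>A\<^esub> ((int d * int d) * bilin n S w w) = \<one>\<^bsub>A\<^esub>"
    using A.int_pow_pow[OF t(1), of "int d * int d" "bilin n S w w", symmetric] t(3) by simp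
  have "tt b [^]\<^bsub>A\<^esub> bilin n S (vadd d n x y) (vadd d n x y) =
      tt b [^]\<^bsub>A\<^esub> bilin n S x x \<otimes>\<^bsub>A\<^esub> tt b [^]\<^bsub>A\<^esub> bilin n S y y \<otimes>\<^bsub>A\<^esub> tt b [^]\<^bsub>A\<^esub> (2 * (B - int d * C))
      \<otimes>\<^bsub>A\<^esub> tt b [^]\<^bsub>A\<^esub> ((int d * int d) * bilin n S w w)"
    unfolding e using t(1) by (simp only: A.int_pow_mult)
  also have "\<dots> = tt b [^]\<^bsub>A\<^esub> bilin n S x x \<otimes>\<^bsub>A\<^esub> tt b [^]\<^bsub>A\<^esub> bilin n S y y \<otimes>\<^bsub>A\<^esub> Z B"
    using w1 t(1) ZB t(2)[of "B - int d * C"] by (simp del: right_diff_distrib)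
  finally show ?thesis unfolding B_def .
qed

end

lemma iso_sym_closed:
  assumes "G \<cong> H" "\<And>x y. x \<in> carrier G \<Longrightarrow> y \<in> carrier G \<Longrightarrow> x \<otimes>\<^bsub>G\<^esub> y \<in> carrier G"
  shows "H \<cong> G"
proof -
  obtain h where h: "h \<in> hom G H" "bij_betw h (carrier G) (carrier H)"
    using assms(1) unfolding is_iso_def iso_def by blast
  define h' where "h' = inv_into (carrier G) h"
  have b': "bij_betw h' (carrier H) (carrier G)" unfolding h'_def by (rule bij_betw_inv_into[OF h(2)])
  have "h' \<in> hom H G"
  proof (rule homI)
    fix x assume "x \<in> carrier H" then show "h' x \<in> carrier G" using bij_betw_apply[OF b'] by blast
  next
    fix x y assume x: "x \<in> carrier H" and y: "y \<in> carrier H"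
    have sj: "h ` carrier G = carrier H" by (rule bij_betw_imp_surj_on[OF h(2)])
    have x': "h' x \<in> carrier G" "h (h' x) = x"
      using bij_betw_apply[OF b' x] apply blast
      unfolding h'_def by (rule f_inv_into_f) (use x sj in simp)
    have y': "h' y \<in> carrier G" "h (h' y) = y"
      using bij_betw_apply[OF b' y] apply blast
      unfolding h'_def by (rule f_inv_into_f) (use y sj in simp)
    have m: "h' x \<otimes>\<^bsub>G\<^esub> h' y \<in> carrier G" using assms(2) x' y' by blast
    have "h (h' x \<otimes>\<^bsub>G\<^esub> h' y) = x \<otimes>\<^bsub>H\<^esub> y" using h(1) x' y' unfolding hom_def by simp
    then have "h' (x \<otimes>\<^bsub>H\<^esub> y) = h' (h (h' x \<otimes>\<^bsub>G\<^esub> h' y))" by simp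
    also have "\<dots> = h' x \<otimes>\<^bsub>G\<^esub> h' y"
    proof -
      have "h' (h z) = z" if "z \<in> carrier G" for z
        unfolding h'_def by (rule inv_into_f_f[OF bij_betw_imp_inj_on[OF h(2)] that])
      then show ?thesis using m by blast
    qed
    finally show "h' (x \<otimes>\<^bsub>H\<^esub> y) = h' x \<otimes>\<^bsub>G\<^esub> h' y" .
  qed
  then show ?thesis using b' unfolding is_iso_def iso_def by blast
qed

context pc_setup
begin

interpretation A: comm_group A by (rule cg)

lemma polar_closed:
  assumes "g \<in> carrier (polar_group d n A \<zeta> F W)" "g' \<in> carrier (polar_group d n A \<zeta> F W)"
  shows "g \<otimes>\<^bsub>polar_group d n A \<zeta> F W\<^esub> g' \<in> carrier (polar_group d n A \<zeta> F W)"
proof -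
  obtain a p x b q y where g: "g = (a, p, x)" "a \<in> F" "p \<in> {0..<int d}" "x \<in> zvecs d n"
      and g': "g' = (b, q, y)" "b \<in> F" "q \<in> {0..<int d}" "y \<in> zvecs d n"
    using assms by (auto simp: polar_carrier)
  have "a \<otimes>\<^bsub>A\<^esub> b \<in> carrier A" using g g' F_sub by auto
  then show ?thesis unfolding g g' using rep_props(1) vadd_in d1 by (simp add: polar_mult polar_carrier)
qed

lemma main_iso:
  assumes b: "b \<in> carrier A" "b \<otimes>\<^bsub>A\<^esub> b = \<zeta> 1"
    and pd: "prime d" and fr: "full_rank_mod d n (omega_mat d W)"
  shows "polar_group d n A \<zeta> F WJ \<cong> polar_group d n A \<zeta> F W"
proof -
  obtain c where ev: "even n" and sf: "sfam d n W (n div 2) c" using sfam_full[OF pd fr] by blast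
  have n2: "2 * (n div 2) = n" using ev by simp
  define \<psi> where "\<psi> = lmap d n n c"
  define M where "M = (\<lambda>a b. bilin n W (c a) (c b) - WJ a b)"
  define S where "S = (\<lambda>a b. M (min a b) (max a b))"
  have Ssym: "S i j = S j i" for i j unfolding S_def by (simp add: min.commute max.commute)
  define \<phi> where "\<phi> = (\<lambda>x. tt b [^]\<^bsub>A\<^esub> bilin n S x x)"
  have SW: "(S a b + WJ a b) mod int d = bilin n W (c a) (c b) mod int d" if "a < n" "b < n" for a b
  proof (cases "a \<le> b")
    case True then show ?thesis unfolding S_def M_def by simp
  next
    case False
    then have "S a b + WJ a b = bilin n W (c b) (c a) + Jf a b"
      unfolding S_def M_def using WJ_skew[of a b] by (simp add: min_def max_def)
    moreover have sk: "skew n W (c a) (c b) mod int d = Jf a b mod int d"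
      using sf that n2 unfolding sfam_def by simp
    moreover have "bilin n W (c a) (c b) = bilin n W (c b) (c a) + skew n W (c a) (c b)"
      unfolding skew_def by simp
    moreover have "(bilin n W (c b) (c a) + Jf a b) mod int d = (bilin n W (c b) (c a) + skew n W (c a) (c b)) mod int d"
      by (rule mod_add_cong) (simp_all add: sk)
    ultimately show ?thesis by simp
  qed
  have eq: "\<phi> (vadd d n x y) \<otimes>\<^bsub>A\<^esub> Z (bilin n WJ x y) = \<phi> x \<otimes>\<^bsub>A\<^esub> \<phi> y \<otimes>\<^bsub>A\<^esub> Z (bilin n W (\<psi> x) (\<psi> y))"
    if x: "x \<in> zvecs d n" and y: "y \<in> zvecs d n" for x y
  proof -
    have pc: "\<phi> x \<in> carrier A" "\<phi> y \<in> carrier A" unfolding \<phi>_def using tt_props[OF b] by auto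
    have "(bilin n S x y + bilin n WJ x y) mod int d = bilin n (\<lambda>a b. S a b + WJ a b) x y mod int d"
      by (simp add: bilin_add_mat)
    also have "\<dots> = bilin n (\<lambda>a b. bilin n W (c a) (c b)) x y mod int d"
      by (rule bilin_cong_mat) (simp add: SW)
    also have "bilin n (\<lambda>a b. bilin n W (c a) (c b)) x y = bilin n W (\<lambda>i. \<Sum>a<n. x a * c a i) (\<lambda>i. \<Sum>b<n. y b * c b i)"
    proof -
      have "bilin n W (\<lambda>i. \<Sum>a<n. x a * c a i) (\<lambda>i. \<Sum>b<n. y b * c b i) = (\<Sum>a<n. x a * (\<Sum>b<n. y b * bilin n W (c a) (c b)))"
        by (simp add: bilin_lin_left bilin_lin_right)
      also have "\<dots> = bilin n (\<lambda>a b. bilin n W (c a) (c b)) x y"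
        unfolding bilin_def[of n "\<lambda>a b. bilin n W (c a) (c b)"] by (simp add: sum_distrib_left mult.commute mult.left_commute)
      finally show ?thesis by simp
    qed
    also have "\<dots> mod int d = bilin n W (\<psi> x) (\<psi> y) mod int d"
      unfolding \<psi>_def by (rule bilin_cong) (simp_all add: lmap_cong)
    finally have md: "(bilin n S x y + bilin n WJ x y) mod int d = bilin n W (\<psi> x) (\<psi> y) mod int d" .
    have "\<phi> (vadd d n x y) \<otimes>\<^bsub>A\<^esub> Z (bilin n WJ x y) = \<phi> x \<otimes>\<^bsub>A\<^esub> \<phi> y \<otimes>\<^bsub>A\<^esub> (Z (bilin n S x y) \<otimes>\<^bsub>A\<^esub> Z (bilin n WJ x y))"
      unfolding \<phi>_def phi_add[OF b Ssym x y] using tt_props[OF b] by (simp add: A.m_assoc)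
    also have "Z (bilin n S x y) \<otimes>\<^bsub>A\<^esub> Z (bilin n WJ x y) = Z (bilin n W (\<psi> x) (\<psi> y))"
    proof -
      have "Z (bilin n S x y + bilin n WJ x y) = Z ((bilin n S x y + bilin n WJ x y) mod int d)" by (simp only: Z_mod)
      also have "\<dots> = Z (bilin n W (\<psi> x) (\<psi> y) mod int d)" by (simp only: md)
      also have "\<dots> = Z (bilin n W (\<psi> x) (\<psi> y))" by (simp only: Z_mod)
      finally show ?thesis by (simp only: Z_add)
    qed
    finally show ?thesis .
  qed
  show ?thesis
  proof (rule iso_crit)
    show "bij_betw \<psi> (zvecs d n) (zvecs d n)" unfolding \<psi>_def using lmap_bij[OF d1 ev] sf by blast
    show "\<psi> (vadd d n x y) = vadd d n (\<psi> x) (\<psi> y)" if "x \<in> zvecs d n" "y \<in> zvecs d n" for x y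
      unfolding \<psi>_def by (rule lmap_add[OF that])
    show "\<phi> x \<in> carrier A" for x unfolding \<phi>_def using tt_props[OF b] by auto
  qed (rule eq)
qed

end

theorem proposition23:
  fixes d n :: nat and A :: "('a, 'b) monoid_scheme" and \<zeta> :: "int \<Rightarrow> 'a"
    and F :: "'a set" and W1 W2 :: "nat \<Rightarrow> nat \<Rightarrow> int"
  assumes "prime d"
    and "comm_group A"
    and "\<zeta> \<in> hom (integer_mod_group d) A" and "inj_on \<zeta> {0..<int d}"
    and "\<forall>a \<in> \<zeta> ` {0..<int d}. \<exists>b \<in> carrier A. b \<otimes>\<^bsub>A\<^esub> b = a"
    and "is_transversal A d \<zeta> F"
    and "W1 \<in> zmats d n" and "W2 \<in> zmats d n"
    and "full_rank_mod d n (omega_mat d W1)" and "full_rank_mod d n (omega_mat d W2)"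
  shows "polar_group d n A \<zeta> F W1 \<cong> polar_group d n A \<zeta> F W2"
proof -
  have d1: "d > 1" using assms(1) prime_gt_1_nat by blast
  interpret pc_setup d A \<zeta> F
    unfolding pc_setup_def using d1 assms(2,3,4,6) by blast
  have "(1::int) \<in> {0..<int d}" using d1 by simp
  then obtain b where b: "b \<in> carrier A" "b \<otimes>\<^bsub>A\<^esub> b = \<zeta> 1" using assms(5) by blast
  have i1: "polar_group d n A \<zeta> F WJ \<cong> polar_group d n A \<zeta> F W1"
    by (rule main_iso[OF b assms(1,9)])
  have i2: "polar_group d n A \<zeta> F WJ \<cong> polar_group d n A \<zeta> F W2"
    by (rule main_iso[OF b assms(1,10)])
  have "polar_group d n A \<zeta> F W1 \<cong> polar_group d n A \<zeta> F WJ"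
    by (rule iso_sym_closed[OF i1 polar_closed])
  then show ?thesis using i2 iso_trans by blast
qed

end
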